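(* Fix $q\ge2$ and $z\in\mathbb Z$, and let $\Delta_n=\log_q n-\lceil\log_q n\rceil$. Then $$\lim_{n\to\infty}\frac{|\mathcal C_1(n,q,\lceil\log_q n\rceil+z)|}{\frac{q^n}{n}\big(\frac{q-1}{q}\big)^2 q^{\,\Delta_n-z-(\log_q e)(q-1)q^{\Delta_n-z-1}}}=1.$$
   Context: $\Sigma_q=\{0,\dots,q-1\}$. For integers $1\le k<n$, $\mathcal C_1(n,q,k)$ is the set of $\vec a\in\Sigma_q^n$ such that $a_1=\dots=a_k=0$, $a_{k+1}\ne0$, $a_n\ne0$, and $(a_{k+2},\dots,a_{n-1})$ contains no run of $k$ consecutive zeros. *)

theory Defs
  imports Complex_Main "HOL-Library.Sublist"
begin

text \<open>Words over \<Sigma>_q = {0,...,q-1} of length n are lists of naturals; position i (1-based)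
  of the paper is list index i-1.  C_1(n,q,k): a_1..a_k = 0, a_{k+1} \<noteq> 0, a_n \<noteq> 0, and
  (a_{k+2},...,a_{n-1}) contains no k consecutive zeros (as a contiguous sublist).
  The standing restriction 1 \<le> k < n is built in (set empty otherwise).\<close>

definition C1 :: "nat \<Rightarrow> nat \<Rightarrow> nat \<Rightarrow> nat list set" where
  "C1 n q k = {a. 1 \<le> k \<and> k < n \<and> length a = n \<and> set a \<subseteq> {0..<q}
      \<and> (\<forall>i<k. a ! i = 0) \<and> a ! k \<noteq> 0 \<and> a ! (n - 1) \<noteq> 0
      \<and> \<not> sublist (replicate k 0) (drop (k + 1) (take (n - 1) a))}"

end

theory Submission
  imports Defs
begin


definition SL :: "nat \<Rightarrow> nat \<Rightarrow> nat list set" where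
  "SL q m = {xs. set xs \<subseteq> {0..<q} \<and> length xs = m}"

lemma finite_SL: "finite (SL q m)"
  unfolding SL_def by (rule finite_lists_length_eq) simp

lemma card_SL: "card (SL q m) = q ^ m"
  unfolding SL_def by (subst card_lists_length_eq) auto

lemma card_SL_Suc:
  "card {xs \<in> SL q (Suc m). P xs} = (\<Sum>c<q. card {xs \<in> SL q m. P (c # xs)})"
proof -
  have "{xs \<in> SL q (Suc m). P xs} = (\<Union>c\<in>{..<q}. (#) c ` {xs \<in> SL q m. P (c # xs)})"
    by (auto simp: SL_def length_Suc_conv)
  also have "card \<dots> = (\<Sum>c<q. card ((#) c ` {xs \<in> SL q m. P (c # xs)}))"
    by (rule card_UN_disjoint) (auto intro: finite_subset[OF _ finite_SL])
  also have "\<dots> = (\<Sum>c<q. card {xs \<in> SL q m. P (c # xs)})"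
    by (intro sum.cong refl card_image) auto
  finally show ?thesis .
qed

fun ok :: "nat \<Rightarrow> nat \<Rightarrow> nat list \<Rightarrow> bool" where
  "ok k j [] = True"
| "ok k j (c # xs) = (if c = 0 then Suc j < k \<and> ok k (Suc j) xs else ok k 0 xs)"

lemma not_prefix_rep:
  assumes "j < k" "c \<noteq> 0"
  shows "\<not> prefix (replicate k (0::nat)) (replicate j 0 @ c # xs)"
proof
  assume "prefix (replicate k (0::nat)) (replicate j 0 @ c # xs)"
  then obtain zs where "replicate j 0 @ c # xs = replicate k 0 @ zs" by (auto simp: prefix_def)
  hence "(replicate j 0 @ c # xs) ! j = (replicate k 0 @ zs) ! j" by simp
  thus False using assms by (simp add: nth_append)
qed

lemma sublist_rep_skip:
  assumes "j < k" "c \<noteq> 0"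
  shows "sublist (replicate k (0::nat)) (replicate j 0 @ c # xs) \<longleftrightarrow> sublist (replicate k 0) xs"
  using assms
proof (induction j)
  case 0
  then show ?case using not_prefix_rep[of 0 k c xs] by (simp add: sublist_Cons_right)
next
  case (Suc j)
  then show ?case using not_prefix_rep[of "Suc j" k c xs]
    by (simp add: sublist_Cons_right del: replicate_Suc) (simp add: sublist_Cons_right)
qed

lemma ok_iff: "j < k \<Longrightarrow> ok k j xs \<longleftrightarrow> \<not> sublist (replicate k (0::nat)) (replicate j 0 @ xs)"
proof (induction xs arbitrary: j)
  case Nil
  then show ?case using sublist_length_le[of "replicate k (0::nat)" "replicate j 0"] by auto
next
  case (Cons c xs)
  show ?case
  proof (cases "c = 0")
    case True
    have e: "replicate j (0::nat) @ c # xs = replicate (Suc j) 0 @ xs"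
      using True by (simp add: replicate_app_Cons_same)
    show ?thesis
    proof (cases "Suc j < k")
      case True
      have "ok k j (c # xs) = ok k (Suc j) xs" using True \<open>c = 0\<close> by simp
      then show ?thesis using Cons.IH[OF True] e by metis
    next
      case False
      hence "Suc j = k" using Cons.prems by simp
      have "sublist (replicate k (0::nat)) (replicate k 0 @ xs)" by (rule prefix_imp_sublist) simp
      hence "sublist (replicate k (0::nat)) (replicate j 0 @ c # xs)" using e \<open>Suc j = k\<close> by metis
      then show ?thesis using \<open>c = 0\<close> \<open>Suc j = k\<close> by simp
    qed
  next
    case False
    then show ?thesis using Cons.IH[of 0] Cons.prems sublist_rep_skip[of j k c xs] by simp
  qed
qed

lemma ok0_iff: "0 < k \<Longrightarrow> ok k 0 xs \<longleftrightarrow> \<not> sublist (replicate k (0::nat)) xs"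
  using ok_iff[of 0 k xs] by simp

definition cnt :: "nat \<Rightarrow> nat \<Rightarrow> nat \<Rightarrow> nat \<Rightarrow> nat" where
  "cnt q k j m = card {xs \<in> SL q m. ok k j xs}"

lemma cnt_0: "cnt q k j 0 = 1"
proof -
  have "{xs \<in> SL q 0. ok k j xs} = {[]}" by (auto simp: SL_def)
  thus ?thesis by (simp add: cnt_def)
qed

lemma cnt_Suc:
  assumes "q \<ge> 1"
  shows "cnt q k j (Suc m) = (if Suc j < k then cnt q k (Suc j) m else 0) + (q - 1) * cnt q k 0 m"
proof -
  obtain q' where q: "q = Suc q'" using assms by (cases q) auto
  have "cnt q k j (Suc m) = (\<Sum>c<q. card {xs \<in> SL q m. ok k j (c # xs)})"
    unfolding cnt_def by (rule card_SL_Suc)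
  also have "\<dots> = card {xs \<in> SL q m. ok k j (0 # xs)} + (\<Sum>c<q'. card {xs \<in> SL q m. ok k j (Suc c # xs)})"
    unfolding q by (rule sum.lessThan_Suc_shift)
  also have "card {xs \<in> SL q m. ok k j (0 # xs)} = (if Suc j < k then cnt q k (Suc j) m else 0)"
    by (auto simp: cnt_def)
  also have "(\<Sum>c<q'. card {xs \<in> SL q m. ok k j (Suc c # xs)}) = q' * cnt q k 0 m"
    by (simp add: cnt_def)
  finally show ?thesis using q by simp
qed

lemma cnt_formula:
  assumes "q \<ge> 1" "j < k"
  shows "cnt q k j m = (if m + j < k then 1 else 0) + (q - 1) * (\<Sum>i<min (k - j) m. cnt q k 0 (m - 1 - i))"
  using assms(2)
proof (induction m arbitrary: j)
  case 0
  then show ?case by (simp add: cnt_0)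
next
  case (Suc m)
  show ?case
  proof (cases "Suc j < k")
    case True
    have mn: "min (k - j) (Suc m) = Suc (min (k - Suc j) m)" using True by simp
    have "cnt q k j (Suc m) = cnt q k (Suc j) m + (q - 1) * cnt q k 0 m"
      using cnt_Suc[OF assms(1)] True by simp
    also have "\<dots> = (if m + Suc j < k then 1 else 0) + (q - 1) * (\<Sum>i<min (k - Suc j) m. cnt q k 0 (m - 1 - i))
        + (q - 1) * cnt q k 0 m" using Suc.IH[OF True] by simp
    also have "\<dots> = (if Suc m + j < k then 1 else 0) + (q - 1) * (\<Sum>i<min (k - j) (Suc m). cnt q k 0 (Suc m - 1 - i))"
      unfolding mn sum.lessThan_Suc_shift by (simp add: algebra_simps)
    finally show ?thesis .
  next
    case False
    hence "Suc j = k" using Suc.prems by simp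
    hence "k - j = 1" by simp
    then show ?thesis using cnt_Suc[OF assms(1), where j=j and k=k and m=m] \<open>Suc j = k\<close> by simp
  qed
qed

definition B :: "nat \<Rightarrow> nat \<Rightarrow> nat \<Rightarrow> nat" where
  "B q k m = card {xs \<in> SL q m. \<not> sublist (replicate k 0) xs}"

lemma B_cnt: "0 < k \<Longrightarrow> B q k m = cnt q k 0 m"
  unfolding B_def cnt_def using ok0_iff[of k] by simp

lemma B_rec:
  assumes "q \<ge> 1" "0 < k" "k \<le> m"
  shows "B q k (Suc m) + (q - 1) * B q k (m - k) = q * B q k m"
proof -
  obtain k' where k: "k = Suc k'" using assms by (cases k) auto
  have f1: "B q k m = (q - 1) * (\<Sum>i<k. B q k (m - 1 - i))"
    using cnt_formula[OF assms(1) assms(2), of m] assms by (simp add: B_cnt)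
  have f2: "B q k (Suc m) = (q - 1) * (\<Sum>i<k. B q k (m - i))"
    using cnt_formula[OF assms(1) assms(2), of "Suc m"] assms by (simp add: B_cnt)
  have s2: "(\<Sum>i<k. B q k (m - i)) = B q k m + (\<Sum>i<k'. B q k (m - 1 - i))"
    unfolding k sum.lessThan_Suc_shift by simp
  have s1: "(\<Sum>i<k. B q k (m - 1 - i)) = (\<Sum>i<k'. B q k (m - 1 - i)) + B q k (m - k)"
    unfolding k using assms k by simp
  obtain q' where q: "q = Suc q'" using assms by (cases q) auto
  show ?thesis using f1 f2 s1 s2 unfolding q by (simp add: algebra_simps)
qed

lemma B_small: "m < k \<Longrightarrow> B q k m = q ^ m"
proof -
  assume "m < k"
  hence "{xs \<in> SL q m. \<not> sublist (replicate k 0) xs} = SL q m"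
    by (auto simp: SL_def dest: sublist_length_le)
  thus ?thesis by (simp add: B_def card_SL)
qed

lemma sub_same: "sublist xs ys \<Longrightarrow> length xs = length ys \<Longrightarrow> xs = ys"
  by (auto simp: sublist_def)

lemma B_k: "q \<ge> 1 \<Longrightarrow> B q k k = q ^ k - 1"
proof -
  assume q: "q \<ge> 1"
  have "{xs \<in> SL q k. \<not> sublist (replicate k 0) xs} = SL q k - {replicate k 0}"
    by (auto simp: SL_def) (metis sub_same length_replicate)
  moreover have "replicate k 0 \<in> SL q k" using q by (auto simp: SL_def)
  ultimately show ?thesis by (simp add: B_def card_SL finite_SL)
qed

lemma C1_eq:
  assumes "1 \<le> k" "k + 2 \<le> n"
  shows "C1 n q k = (\<lambda>(c, d, w). replicate k 0 @ c # w @ [d]) `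
     ({1..<q} \<times> {1..<q} \<times> {xs \<in> SL q (n - k - 2). \<not> sublist (replicate k 0) xs})"
    (is "_ = ?f ` ?A")
proof
  show "?f ` ?A \<subseteq> C1 n q k"
  proof
    fix a assume "a \<in> ?f ` ?A"
    then obtain c d w where a: "a = replicate k 0 @ c # w @ [d]" and c: "c \<in> {1..<q}" and d: "d \<in> {1..<q}"
      and w: "w \<in> SL q (n - k - 2)" "\<not> sublist (replicate k 0) w" by auto
    have lw: "length w = n - k - 2" using w by (simp add: SL_def)
    have a2: "a = (replicate k 0 @ c # w) @ [d]" using a by simp
    have len: "length a = n" using a lw assms by simp
    have "set a \<subseteq> {0..<q}" using a c d w by (auto simp: SL_def)
    moreover have "\<forall>i<k. a ! i = 0" using a by (simp add: nth_append)
    moreover have "a ! k = c" using a by (simp add: nth_append)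
    moreover have "a ! (n - 1) = d"
    proof -
      have "length (replicate k 0 @ c # w) = n - 1" using lw assms by simp
      thus ?thesis using a2 by (metis nth_append_length)
    qed
    moreover have "take (n - 1) a = replicate k 0 @ c # w"
    proof -
      have "length (replicate k 0 @ c # w) = n - 1" using lw assms by simp
      thus ?thesis using a2 by (metis append_eq_conv_conj)
    qed
    ultimately show "a \<in> C1 n q k" using c d w len assms unfolding C1_def by simp
  qed
next
  show "C1 n q k \<subseteq> ?f ` ?A"
  proof
    fix a assume "a \<in> C1 n q k"
    hence len: "length a = n" and st: "set a \<subseteq> {0..<q}" and z: "\<forall>i<k. a ! i = 0"
      and ak: "a ! k \<noteq> 0" and an: "a ! (n - 1) \<noteq> 0"
      and ns: "\<not> sublist (replicate k 0) (drop (k + 1) (take (n - 1) a))"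
      unfolding C1_def by auto
    define w where "w = drop (k + 1) (take (n - 1) a)"
    have tk: "take k a = replicate k 0"
      using z len assms by (intro nth_equalityI) auto
    have e1: "take (n - 1) a @ [a ! (n - 1)] = a"
    proof -
      have "take (Suc (n - 1)) a = take (n - 1) a @ [a ! (n - 1)]"
        by (rule take_Suc_conv_app_nth) (use len assms in simp)
      moreover have "Suc (n - 1) = n" using assms by simp
      ultimately show ?thesis using len by simp
    qed
    have e2: "take (n - 1) a = take k (take (n - 1) a) @ drop k (take (n - 1) a)" by (rule append_take_drop_id[symmetric])
    have e4: "take k (take (n - 1) a) = take k a" using assms by (simp add: min_absorb1)
    have e3: "drop k (take (n - 1) a) = a ! k # w"
      unfolding w_def using len assms by (subst Cons_nth_drop_Suc[symmetric]) auto
    have "a = (replicate k 0 @ a ! k # w) @ [a ! (n - 1)]"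
      using e1 e2 e3 e4 tk by simp
    hence "a = replicate k 0 @ a ! k # w @ [a ! (n - 1)]" by simp
    moreover have "a ! k \<in> set a" "a ! (n - 1) \<in> set a" using len assms by auto
    moreover have "w \<in> SL q (n - k - 2)" using st len assms unfolding w_def SL_def
      by (auto dest: in_set_dropD in_set_takeD)
    ultimately show "a \<in> ?f ` ?A" using st ak an ns unfolding w_def
      by (intro image_eqI[where x = "(a ! k, a ! (n - 1), w)"]) (auto simp: w_def)
  qed
qed

lemma card_C1:
  assumes "1 \<le> k" "k + 2 \<le> n"
  shows "card (C1 n q k) = (q - 1) ^ 2 * B q k (n - k - 2)"
proof -
  have inj: "inj_on (\<lambda>(c, d, w). replicate k (0::nat) @ c # w @ [d])
     ({1..<q} \<times> {1..<q} \<times> {xs \<in> SL q (n - k - 2). \<not> sublist (replicate k 0) xs})"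
    by (auto simp: inj_on_def SL_def)
  show ?thesis unfolding C1_eq[OF assms] card_image[OF inj]
    by (simp add: card_cartesian_product B_def power2_eq_square)
qed



lemma tele: "a \<le> b \<Longrightarrow> (\<Sum>i=a..<b. (f::nat\<Rightarrow>real) i - f (Suc i)) = f a - f b"
proof -
  assume "a \<le> b"
  have "(\<Sum>i=a..<b. f i - f (Suc i)) = - (\<Sum>i=a..<b. f (Suc i) - f i)"
    by (simp add: sum_negf[symmetric])
  also have "\<dots> = f a - f b" using sum_Suc_diff'[OF \<open>a \<le> b\<close>, of f] by simp
  finally show ?thesis .
qed

lemma f_bounds:
  fixes f :: "nat \<Rightarrow> real" and e c :: real and k :: nat
  assumes F1: "\<And>m. m < k \<Longrightarrow> f m = 1"
    and F2: "f k = 1 - c"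
    and F3: "\<And>m. k \<le> m \<Longrightarrow> f (Suc m) = f m - e * f (m - k)"
    and F4: "\<And>m. f m \<ge> 0"
    and c0: "0 \<le> c" and c2: "c \<le> 2 * e" and e0: "0 < e" and k1: "1 \<le> k"
    and small: "k * e \<le> 1/20"
  shows "f m \<le> (1 - e) ^ (m - k)"
    and "(1 - c) * (1 - e * (1 + 4 * k * e)) ^ (m - k) \<le> f m"
proof -
  define R where "R = 1 + 4 * k * e"
  have R1: "1 \<le> R" using e0 by (simp add: R_def)
  have dec1: "f (Suc m) \<le> f m" for m
  proof (cases "k \<le> m")
    case True thus ?thesis using F3[OF True] F4[of "m - k"] e0 by simp
  next
    case False
    show ?thesis
    proof (cases "Suc m < k")
      case True thus ?thesis using F1 by simp
    next
      case False
      hence "Suc m = k" using \<open>\<not> k \<le> m\<close> by simp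
      thus ?thesis using F1[of m] F2 c0 by simp
    qed
  qed
  have dec: "decseq f" by (rule decseq_SucI) (use dec1 in auto)
  have mono: "m \<le> m' \<Longrightarrow> f m' \<le> f m" for m m' using decseqD[OF dec] by blast
  have le1: "f m \<le> 1" for m using mono[of 0 m] F1[of 0] k1 by simp
  have ke: "k * e \<ge> e" using k1 e0 by simp
  have ratio: "k \<le> m \<Longrightarrow> f (m - k) \<le> R * f m" for m
  proof (induction m rule: less_induct)
    case (less m)
    have "\<forall>i\<in>{m-k..<m}. f i - f (Suc i) \<le> 2 * e * R * f (m - k)"
    proof
      fix i assume i: "i \<in> {m-k..<m}"
      have nn: "0 \<le> 2 * e * R * f (m - k)" using e0 R1 F4[of "m-k"] by simp
      show "f i - f (Suc i) \<le> 2 * e * R * f (m - k)"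
      proof (cases "k \<le> i")
        case True
        have "f i - f (Suc i) = e * f (i - k)" using F3[OF True] by simp
        also have "\<dots> \<le> e * (R * f i)" using less.IH[of i] i True e0 by (intro mult_left_mono) auto
        also have "\<dots> \<le> e * (R * f (m - k))" using mono[of "m-k" i] i e0 R1
          by (intro mult_left_mono) auto
        also have "\<dots> \<le> 2 * e * R * f (m - k)" using nn by simp
        finally show ?thesis .
      next
        case False
        show ?thesis
        proof (cases "Suc i < k")
          case True thus ?thesis using F1[of i] F1[of "Suc i"] nn by simp
        next
          case False
          hence "Suc i = k" using \<open>\<not> k \<le> i\<close> by simp
          hence "m - k < k" using i by auto
          hence "f (m - k) = 1" using F1 by simp
          moreover have "f i - f (Suc i) = c" using F1[of i] F2 \<open>Suc i = k\<close> by simp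
          moreover have "2 * e * 1 \<le> 2 * e * R" using R1 e0 by (intro mult_left_mono) auto
          ultimately show ?thesis using c2 by simp
        qed
      qed
    qed
    hence "(\<Sum>i=m-k..<m. f i - f (Suc i)) \<le> (\<Sum>i=m-k..<m. 2 * e * R * f (m - k))"
      by (intro sum_mono) blast
    also have "\<dots> = k * (2 * e * R * f (m - k))" using less.prems by simp
    finally have "f (m - k) - f m \<le> k * (2 * e * R * f (m - k))" using tele[of "m-k" m f] by simp
    hence A: "f (m - k) * (1 - 2 * (k * e) * R) \<le> f m" by (simp add: algebra_simps)
    define x where "x = k * e"
    have x0: "0 \<le> x" and x1: "x \<le> 1/20" using e0 small by (auto simp: x_def)
    have Rx: "R = 1 + 4 * x" by (simp add: R_def x_def)
    have "R * R \<le> (6/5) * (6/5)" unfolding Rx using x0 x1 by (intro mult_mono) auto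
    hence "x * (R * R) \<le> x * 2" using x0 by (intro mult_left_mono) auto
    moreover have "R * (1 - 2 * x * R) = R - 2 * (x * (R * R))" by (simp add: algebra_simps)
    ultimately have B: "1 \<le> R * (1 - 2 * x * R)" using Rx by linarith
    have "f (m - k) \<le> f (m - k) * (R * (1 - 2 * x * R))" using B F4[of "m-k"]
      by (metis mult.right_neutral mult_left_mono)
    also have "\<dots> = R * (f (m - k) * (1 - 2 * x * R))" by simp
    also have "\<dots> \<le> R * f m" using A R1 unfolding x_def by (intro mult_left_mono) auto
    finally show ?case .
  qed
  have e1: "e \<le> 1" using ke small by simp
  show "f m \<le> (1 - e) ^ (m - k)"
  proof (induction m)
    case 0 thus ?case using le1 by simp
  next
    case (Suc m)
    show ?case
    proof (cases "k \<le> m")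
      case True
      have "f (Suc m) = f m - e * f (m - k)" by (rule F3[OF True])
      also have "\<dots> \<le> f m - e * f m" using mono[of "m - k" m] e0 by (intro diff_left_mono mult_left_mono) auto
      also have "\<dots> = (1 - e) * f m" by (simp add: algebra_simps)
      also have "\<dots> \<le> (1 - e) * (1 - e) ^ (m - k)" using Suc e1 by (intro mult_left_mono) auto
      also have "\<dots> = (1 - e) ^ (Suc m - k)" using True by (simp add: Suc_diff_le)
      finally show ?thesis .
    next
      case False thus ?thesis using le1[of "Suc m"] by simp
    qed
  qed
  have "(k * e) * e \<le> (1/20) * 1" using small e1 e0 by (intro mult_mono) auto
  moreover have "e * R = e + 4 * ((k * e) * e)" unfolding R_def by (simp add: algebra_simps)
  ultimately have eR: "e * R \<le> 1" using e1 small ke by linarith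
  have c1: "c \<le> 1" using c2 e1 ke small by simp
  show "(1 - c) * (1 - e * (1 + 4 * k * e)) ^ (m - k) \<le> f m"
  proof (induction m)
    case 0 thus ?case using F1[of 0] k1 c0 by simp
  next
    case (Suc m)
    show ?case
    proof (cases "k \<le> m")
      case True
      have "(1 - c) * (1 - e * R) ^ (Suc m - k) = (1 - e * R) * ((1 - c) * (1 - e * R) ^ (m - k))"
        using True by (simp add: Suc_diff_le)
      also have "\<dots> \<le> (1 - e * R) * f m" using Suc eR unfolding R_def by (intro mult_left_mono) auto
      also have "\<dots> = f m - e * (R * f m)" by (simp add: algebra_simps)
      also have "\<dots> \<le> f m - e * f (m - k)" using ratio[OF True] e0 by (intro diff_left_mono mult_left_mono) auto
      also have "\<dots> = f (Suc m)" using F3[OF True] by simp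
      finally show ?thesis unfolding R_def .
    next
      case False
      show ?thesis
      proof (cases "Suc m = k")
        case True thus ?thesis using F2 by simp
      next
        case False
        thus ?thesis using F1[of "Suc m"] \<open>\<not> k \<le> m\<close> c0 c1 by simp
      qed
    qed
  qed
qed



lemma B_bounds:
  fixes q k :: nat
  defines "e \<equiv> (real q - 1) / real q ^ (k + 1)"
  assumes q2: "q \<ge> 2" and k1: "k \<ge> 1" and small: "real k * e \<le> 1/20"
  shows "real (B q k m) / real q ^ m \<le> (1 - e) ^ (m - k)"
    and "(1 - 1 / real q ^ k) * (1 - e * (1 + 4 * real k * e)) ^ (m - k) \<le> real (B q k m) / real q ^ m"
proof -
  define f where "f m = real (B q k m) / real q ^ m" for m
  have qpos: "real q > 0" using q2 by simp
  have F1: "f m = 1" if "m < k" for m using B_small[OF that] qpos by (simp add: f_def)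
  have F2: "f k = 1 - 1 / real q ^ k" using B_k[of q k] q2 qpos
    by (simp add: f_def of_nat_diff field_simps)
  have F3: "f (Suc m) = f m - e * f (m - k)" if "k \<le> m" for m
  proof -
    have r: "B q k (Suc m) + (q - 1) * B q k (m - k) = q * B q k m"
      using B_rec[of q k m] q2 k1 that by simp
    obtain q' where q': "q = Suc q'" using q2 by (cases q) auto
    have "real (B q k (Suc m) + q' * B q k (m - k)) = real (q * B q k m)" using r q' by simp
    hence r': "real (B q k (Suc m)) = real q * B q k m - (real q - 1) * B q k (m - k)"
      using q' by (simp add: algebra_simps)
    have pm: "real q ^ m = real q ^ k * real q ^ (m - k)"
      using that by (simp flip: power_add)
    show ?thesis unfolding f_def e_def r' using qpos pm by (simp add: field_simps)
  qed
  have F4: "f m \<ge> 0" for m by (simp add: f_def)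
  have e0: "0 < e" using q2 by (simp add: e_def)
  have c2: "1 / real q ^ k \<le> 2 * e"
  proof -
    have "real q \<le> 2 * (real q - 1)" using q2 by simp
    hence "real q / real q ^ (k+1) \<le> 2 * (real q - 1) / real q ^ (k+1)"
      using qpos by (intro divide_right_mono) auto
    thus ?thesis using qpos by (simp add: e_def)
  qed
  note fb = f_bounds[of k f "1 / real q ^ k" e, OF F1 F2 F3 F4 _ c2 e0 k1]
  show "real (B q k m) / real q ^ m \<le> (1 - e) ^ (m - k)"
    using fb(1) small qpos by (simp add: f_def)
  show "(1 - 1 / real q ^ k) * (1 - e * (1 + 4 * real k * e)) ^ (m - k) \<le> real (B q k m) / real q ^ m"
    using fb(2)[of m] small qpos by (simp add: f_def)
qed



lemma alg:
  fixes a b qm qk qq N E :: real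
  assumes "a > 0" "qm > 0" "qk > 0" "qq > 0" "N > 0" "E > 0"
  shows "a ^ 2 * b / ((qm * qk * qq ^ 2 / N) * (a / qq) ^ 2 * ((N / qk) / E)) = b / qm * E"
  using assms by (simp add: field_simps power2_eq_square)

definition ratio :: "nat \<Rightarrow> int \<Rightarrow> nat \<Rightarrow> real" where
  "ratio q z n = real (card (C1 n q (nat (\<lceil>log q (real n)\<rceil> + z))))
           / ((real q ^ n / real n) * ((real q - 1) / real q) ^ 2
              * real q powr ((log q (real n) - \<lceil>log q (real n)\<rceil>) - z
                   - log q (exp 1) * (real q - 1)
                     * real q powr ((log q (real n) - \<lceil>log q (real n)\<rceil>) - z - 1)))"

lemma ratio_bounds:
  fixes q n k :: nat and z :: int
  defines "e \<equiv> (real q - 1) / real q ^ (k + 1)"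
  defines "C \<equiv> real q powr (- real_of_int z)"
  assumes q2: "q \<ge> 2" and n1: "n \<ge> 1" and K1: "\<lceil>log q (real n)\<rceil> + z \<ge> 1"
    and kdef: "k = nat (\<lceil>log q (real n)\<rceil> + z)" and kn: "k + 2 \<le> n"
    and small: "real k * e \<le> 1/20" and esmall: "e \<le> 1/20"
  shows "ratio q z n \<le> exp ((2 * real k + 2) * e)"
    and "(1 - 1 / real q ^ k) * exp (- C * ((1 + 4 * real k * e) / (1 - e * (1 + 4 * real k * e)) - 1)) \<le> ratio q z n"
proof -
  define L where "L = log q (real n)"
  define m where "m = n - k - 2"
  have qpos: "real q > 0" and q1: "real q \<noteq> 1" using q2 by auto
  have npos: "real n > 0" using n1 by simp
  have k1: "k \<ge> 1" using K1 kdef by simp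
  have hk: "real k = \<lceil>L\<rceil> + z" using K1 kdef L_def by simp
  have hn: "real n = real m + real k + 2" using kn by (simp add: m_def)
  have card: "card (C1 n q k) = (q - 1) ^ 2 * B q k m"
    using card_C1[of k n q] k1 kn by (simp add: m_def)
  have qL: "real q powr L = real n" unfolding L_def using qpos q1 npos by simp
  have p1: "real q powr (L - \<lceil>L\<rceil> - z) = real n / real q ^ k"
  proof -
    have "L - \<lceil>L\<rceil> - z = L - real k" using hk by simp
    hence "real q powr (L - \<lceil>L\<rceil> - z) = real q powr L / real q powr real k"
      by (metis powr_diff)
    thus ?thesis using qL qpos by (simp add: powr_realpow)
  qed
  have p2: "real q powr (L - \<lceil>L\<rceil> - z - 1) = real n / real q ^ (k + 1)"
  proof -
    have "L - \<lceil>L\<rceil> - z - 1 = L - real (k + 1)" using hk by simp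
    hence "real q powr (L - \<lceil>L\<rceil> - z - 1) = real q powr L / real q powr real (k + 1)"
      by (metis powr_diff)
    thus ?thesis using qL qpos by (simp only: powr_realpow)
  qed
  have qk1: "1 / real q ^ k \<le> 1"
  proof -
    have "1 \<le> real q ^ k" using q2 by simp
    thus ?thesis by (simp add: divide_le_eq)
  qed
  have lnq: "ln (real q) \<noteq> 0" using q2 by simp
  have p3: "real q powr (a - log q (exp 1) * Y) = real q powr a / exp Y" for a Y
  proof -
    have "real q powr (log q (exp 1) * Y) = exp Y"
      using qpos lnq by (simp add: powr_def log_def)
    thus ?thesis by (simp add: powr_diff)
  qed
  have ne: "(real q - 1) * (real n / real q ^ (k + 1)) = real n * e" by (simp add: e_def)
  have D: "(real q ^ n / real n) * ((real q - 1) / real q) ^ 2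
              * real q powr ((log q (real n) - \<lceil>log q (real n)\<rceil>) - z
                   - log q (exp 1) * (real q - 1)
                     * real q powr ((log q (real n) - \<lceil>log q (real n)\<rceil>) - z - 1))
      = (real q ^ n / real n) * ((real q - 1) / real q) ^ 2 * ((real n / real q ^ k) / exp (real n * e))"
    unfolding L_def[symmetric] p2 mult.assoc ne p3 p1 by simp
  have qn: "real q ^ n = real q ^ m * real q ^ k * real q ^ 2"
  proof -
    have "n = m + k + 2" using kn by (simp add: m_def)
    thus ?thesis by (metis power_add)
  qed
  have q1': "real q - 1 > 0" using q2 by simp
  have rat: "ratio q z n = real (B q k m) / real q ^ m * exp (real n * e)"
  proof -
    have cr: "real ((q - 1) ^ 2 * B q k m) = (real q - 1) ^ 2 * real (B q k m)"
      using q2 by (simp add: of_nat_diff)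
    show ?thesis
      unfolding ratio_def kdef[symmetric] card cr D unfolding qn
      by (rule alg) (use qpos npos q1' in auto)
  qed
  have e0: "0 \<le> e" using q2 by (simp add: e_def)
  note bb = B_bounds[of q k m, folded e_def, OF q2 k1 small]
  have e1: "1 - e \<ge> 0" using esmall by simp
  have "real (B q k m) / real q ^ m \<le> (1 - e) ^ (m - k)" by (rule bb(1))
  also have "\<dots> \<le> exp (- e) ^ (m - k)"
    using e1 exp_ge_add_one_self[of "-e"] by (intro power_mono) auto
  also have "\<dots> = exp (- (real (m - k) * e))" by (simp flip: exp_of_nat_mult)
  finally have up: "real (B q k m) / real q ^ m \<le> exp (- (real (m - k) * e))" .
  have "real m - real k \<le> real (m - k)" by simp
  hence "(real n - real (m - k)) * e \<le> (2 * real k + 2) * e" using hn e0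
    by (intro mult_right_mono) auto
  hence "exp (- (real (m - k) * e)) * exp (real n * e) \<le> exp ((2 * real k + 2) * e)"
    by (simp add: exp_add[symmetric] algebra_simps)
  with up show "ratio q z n \<le> exp ((2 * real k + 2) * e)" unfolding rat
    by (meson exp_gt_zero less_imp_le mult_right_mono order_trans)
  define R where "R = 1 + 4 * real k * e"
  define r where "r = e * R"
  have R1: "R \<ge> 1" using e0 by (simp add: R_def)
  have "e * R \<le> (1/20) * (6/5)" unfolding R_def using e0 esmall small by (intro mult_mono) auto
  hence r1: "r < 1" and r0: "0 \<le> r" using e0 R1 by (auto simp: r_def)
  have ex: "exp (- (r / (1 - r))) \<le> 1 - r"
  proof -
    have "1 + r / (1 - r) \<le> exp (r / (1 - r))" by (rule exp_ge_add_one_self)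
    moreover have "1 + r / (1 - r) = 1 / (1 - r)" using r1 by (simp add: field_simps)
    ultimately have "1 / (1 - r) \<le> exp (r / (1 - r))" by simp
    hence "inverse (exp (r / (1 - r))) \<le> inverse (1 / (1 - r))" using r1
      by (intro le_imp_inverse_le) auto
    thus ?thesis using r1 by (simp add: exp_minus)
  qed
  have "(1 - 1 / real q ^ k) * exp (- (real (m - k) * (r / (1 - r))))
      = (1 - 1 / real q ^ k) * exp (- (r / (1 - r))) ^ (m - k)" by (simp flip: exp_of_nat_mult)
  also have "\<dots> \<le> (1 - 1 / real q ^ k) * (1 - r) ^ (m - k)"
  proof (rule mult_left_mono)
    show "exp (- (r / (1 - r))) ^ (m - k) \<le> (1 - r) ^ (m - k)" using ex by (intro power_mono) auto
    show "0 \<le> 1 - 1 / real q ^ k" using qk1 by simp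
  qed
  also have "\<dots> \<le> real (B q k m) / real q ^ m" using bb(2) by (simp add: r_def R_def)
  finally have lo: "(1 - 1 / real q ^ k) * exp (- (real (m - k) * (r / (1 - r)))) \<le> real (B q k m) / real q ^ m" .
  have neC: "real n * e \<le> C"
  proof -
    have "real q ^ k = real q powr real k" using qpos by (simp add: powr_realpow)
    also have "\<dots> \<ge> real q powr (L + z)" using hk q2 by (intro powr_mono) auto
    finally have qk: "real q ^ k \<ge> real n * real q powr z" using qL qpos by (simp add: powr_add)
    have "real n * e \<le> real n / real q ^ k"
    proof -
      have "(real q - 1) / real q ^ (k + 1) \<le> real q / real q ^ (k+1)" using qpos
        by (intro divide_right_mono) auto
      also have "\<dots> = 1 / real q ^ k" using qpos by simp
      finally show ?thesis unfolding e_def using npos by (simp add: divide_simps)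
    qed
    also have "\<dots> \<le> real n / (real n * real q powr z)" using qk npos qpos
      by (intro divide_left_mono) auto
    also have "\<dots> = C" using npos qpos by (simp add: C_def powr_minus divide_simps)
    finally show ?thesis .
  qed
  have Rr: "R / (1 - r) - 1 \<ge> 0" using R1 r0 r1 by (simp add: field_simps)
  have "- C * (R / (1 - r) - 1) \<le> - (real n * e) * (R / (1 - r) - 1)"
    using neC Rr by (simp add: mult_right_mono)
  also have "\<dots> = real n * e - real n * (r / (1 - r))" using r1 by (simp add: r_def field_simps)
  also have "\<dots> \<le> real n * e - real (m - k) * (r / (1 - r))"
  proof -
    have "real (m - k) \<le> real n" using kn by (simp add: m_def)
    moreover have "r / (1 - r) \<ge> 0" using r0 r1 by simp
    ultimately have "real (m - k) * (r / (1 - r)) \<le> real n * (r / (1 - r))" by (rule mult_right_mono)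
    thus ?thesis by linarith
  qed
  finally have ex2: "exp (- C * (R / (1 - r) - 1)) \<le> exp (- (real (m - k) * (r / (1 - r)))) * exp (real n * e)"
    by (simp add: exp_add[symmetric])
  have c0: "0 \<le> 1 - 1 / real q ^ k" using qk1 by simp
  have "(1 - 1 / real q ^ k) * exp (- C * (R / (1 - r) - 1))
      \<le> (1 - 1 / real q ^ k) * (exp (- (real (m - k) * (r / (1 - r)))) * exp (real n * e))"
    using ex2 c0 by (rule mult_left_mono)
  also have "\<dots> \<le> real (B q k m) / real q ^ m * exp (real n * e)"
    using mult_right_mono[OF lo, of "exp (real n * e)"] by (simp add: mult.assoc)
  finally show "(1 - 1 / real q ^ k) * exp (- C * ((1 + 4 * real k * e) / (1 - e * (1 + 4 * real k * e)) - 1)) \<le> ratio q z n"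
    unfolding rat by (simp add: R_def r_def)
qed



lemma ev_sqrt:
  fixes c A :: real assumes "c \<ge> 0" "A \<ge> 0"
  shows "eventually (\<lambda>n::nat. 2 * c * sqrt (real n) + A \<le> real n) sequentially"
proof (rule eventually_sequentiallyI[of "nat \<lceil>(2 * c + A + 1)^2\<rceil>"])
  fix n :: nat assume n: "nat \<lceil>(2 * c + A + 1)^2\<rceil> \<le> n"
  define s where "s = sqrt (real n)"
  have "(2 * c + A + 1)^2 \<le> real n" using n by linarith
  hence "sqrt ((2 * c + A + 1)^2) \<le> s" unfolding s_def by (rule real_sqrt_le_mono)
  hence s1: "2 * c + A + 1 \<le> s" using assms by simp
  have ss: "s * s = real n" by (simp add: s_def)
  have "s * (2 * c + A + 1) \<le> s * s" using s1 assms by (intro mult_left_mono) auto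
  moreover have "A \<le> s * A" using s1 assms by (simp add: mult_le_cancel_right1)
  moreover have "s * (2 * c + A + 1) = 2 * c * s + s * A + s" by (simp add: algebra_simps)
  moreover have "0 \<le> s" by (simp add: s_def)
  ultimately show "2 * c * sqrt (real n) + A \<le> real n" using ss unfolding s_def[symmetric]
    by linarith
qed

lemma log_le_sqrt:
  assumes q2: "(q::nat) \<ge> 2" and n: "n \<ge> 1"
  shows "log q (real n) \<le> 2 * (1 / ln q) * sqrt (real n)"
proof -
  have lq: "ln (real q) > 0" using q2 by simp
  have "ln (real n) = 2 * ln (sqrt (real n))" using n by (simp add: ln_sqrt)
  also have "\<dots> \<le> 2 * (sqrt (real n) - 1)" using n ln_le_minus_one[of "sqrt (real n)"] by simp
  also have "\<dots> \<le> 2 * sqrt (real n)" by simp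
  finally have "ln (real n) \<le> 2 * sqrt (real n)" .
  thus ?thesis using lq by (simp add: log_def divide_right_mono)
qed

lemma log_top:
  assumes q2: "(q::nat) \<ge> 2"
  shows "eventually (\<lambda>n::nat. Z \<le> log q (real n)) sequentially"
proof (rule eventually_sequentiallyI[of "nat \<lceil>real q powr Z\<rceil> + 1"])
  fix n :: nat assume n: "nat \<lceil>real q powr Z\<rceil> + 1 \<le> n"
  hence pn: "real q powr Z \<le> real n" by linarith
  have "Z = log q (real q powr Z)" using q2 by simp
  also have "\<dots> \<le> log q (real n)" using pn q2 by (intro log_mono) auto
  finally show "Z \<le> log q (real n)" .
qed

lemma main_lim:
  fixes q :: nat and z :: int
  assumes q2: "q \<ge> 2"
  shows "(\<lambda>n. ratio q z n) \<longlonglongrightarrow> 1"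
proof -
  define kf where "kf n = nat (\<lceil>log q (real n)\<rceil> + z)" for n :: nat
  define e where "e k = (real q - 1) / real q ^ (k + 1)" for k :: nat
  define C where "C = real q powr (- real_of_int z)"
  define U where "U k = exp ((2 * real k + 2) * e k)" for k
  define W where "W k = (1 - 1 / real q ^ k) * exp (- C * ((1 + 4 * real k * e k) / (1 - e k * (1 + 4 * real k * e k)) - 1))" for k
  have qg1: "1 < real q" using q2 by simp
  have ie: "(\<lambda>k. inverse (real q ^ k)) \<longlonglongrightarrow> 0" by (rule LIMSEQ_inverse_realpow_zero[OF qg1])
  have eeq: "e k = (real q - 1) / real q * inverse (real q ^ k)" for k
    using qg1 by (simp add: e_def field_simps)
  have aeq: "real k * e k = (real q - 1) / real q * (real k / real q ^ k)" for k
    using qg1 by (simp add: e_def field_simps)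
  have elim: "e \<longlonglongrightarrow> 0"
    unfolding eeq using tendsto_mult[OF tendsto_const ie, of "(real q - 1) / real q"] by simp
  have nq: "(\<lambda>k. real k / real q ^ k) \<longlonglongrightarrow> 0"
    using lim_n_over_pown[of "real q"] qg1 by simp
  have alim: "(\<lambda>k. real k * e k) \<longlonglongrightarrow> 0"
    unfolding aeq using tendsto_mult[OF tendsto_const nq, of "(real q - 1) / real q"] by simp
  have Ueq: "U k = exp (2 * (real k * e k) + 2 * e k)" for k by (simp add: U_def algebra_simps)
  have Ulim: "U \<longlonglongrightarrow> 1"
  proof -
    have "(\<lambda>k. exp (2 * (real k * e k) + 2 * e k)) \<longlonglongrightarrow> exp (2 * 0 + 2 * 0)"
      by (intro tendsto_intros alim elim)
    thus ?thesis unfolding Ueq[abs_def] by simp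
  qed
  have Weq: "W k = (1 - inverse (real q ^ k)) * exp (- C * ((1 + 4 * (real k * e k)) / (1 - e k * (1 + 4 * (real k * e k))) - 1))" for k
    by (simp add: W_def divide_inverse mult.assoc)
  have Wlim: "W \<longlonglongrightarrow> 1"
  proof -
    have "(\<lambda>k. (1 - inverse (real q ^ k)) * exp (- C * ((1 + 4 * (real k * e k)) / (1 - e k * (1 + 4 * (real k * e k))) - 1)))
        \<longlonglongrightarrow> (1 - 0) * exp (- C * ((1 + 4 * 0) / (1 - 0 * (1 + 4 * 0)) - 1))"
      by (intro tendsto_intros alim elim ie) simp
    thus ?thesis unfolding Weq[abs_def] by simp
  qed
  have kf_top: "filterlim kf at_top sequentially"
    unfolding filterlim_at_top
  proof
    fix Z :: nat
    show "eventually (\<lambda>n. Z \<le> kf n) sequentially"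
      using log_top[OF q2, of "real Z - z"]
    proof (rule eventually_mono)
      fix n assume "real Z - real_of_int z \<le> log q (real n)"
      hence "real Z \<le> real_of_int (\<lceil>log q (real n)\<rceil> + z)" by linarith
      thus "Z \<le> kf n" unfolding kf_def by linarith
    qed
  qed
  have ev_small: "eventually (\<lambda>n. real (kf n) * e (kf n) \<le> 1/20) sequentially"
  proof -
    have "eventually (\<lambda>k. real k * e k < 1/20) sequentially"
      by (rule order_tendstoD(2)[OF alim]) simp
    hence "eventually (\<lambda>k. real k * e k \<le> 1/20) at_top" by (simp add: eventually_mono less_imp_le)
    thus ?thesis by (rule eventually_compose_filterlim[OF _ kf_top])
  qed
  have ev_esmall: "eventually (\<lambda>n. e (kf n) \<le> 1/20) sequentially"
  proof -
    have "eventually (\<lambda>k. e k < 1/20) sequentially"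
      by (rule order_tendstoD(2)[OF elim]) simp
    hence "eventually (\<lambda>k. e k \<le> 1/20) at_top" by (simp add: eventually_mono less_imp_le)
    thus ?thesis by (rule eventually_compose_filterlim[OF _ kf_top])
  qed
  have ev_n1: "eventually (\<lambda>n::nat. n \<ge> 1) sequentially" by (rule eventually_ge_at_top)
  have ev_K1: "eventually (\<lambda>n. \<lceil>log q (real n)\<rceil> + z \<ge> 1) sequentially"
    using log_top[OF q2, of "1 - z"] by (rule eventually_mono) linarith
  have ev_kn: "eventually (\<lambda>n. kf n + 2 \<le> n) sequentially"
  proof -
    have "eventually (\<lambda>n::nat. 2 * (1 / ln q) * sqrt (real n) + (\<bar>real_of_int z\<bar> + 3) \<le> real n) sequentially"
      using q2 by (intro ev_sqrt) auto
    with ev_n1 show ?thesis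
    proof (rule eventually_elim2)
      fix n :: nat assume n1: "n \<ge> 1" and h: "2 * (1 / ln q) * sqrt (real n) + (\<bar>real_of_int z\<bar> + 3) \<le> real n"
      have "log q (real n) \<le> 2 * (1 / ln q) * sqrt (real n)" by (rule log_le_sqrt[OF q2 n1])
      moreover have "real (kf n) \<le> max 0 (log q (real n) + z + 1)" unfolding kf_def by linarith
      moreover have "0 \<le> 2 * (1 / ln q) * sqrt (real n)" using q2 by simp
      ultimately have "max 0 (log q (real n) + z + 1) \<le> real n - 2" using h
        by (simp add: max_def) linarith
      hence "real (kf n) + 2 \<le> real n" using \<open>real (kf n) \<le> _\<close> by linarith
      hence "real (kf n + 2) \<le> real n" by simp
      thus "kf n + 2 \<le> n" by (simp only: of_nat_le_iff)
    qed
  qed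
  have ev_up: "eventually (\<lambda>n. ratio q z n \<le> U (kf n)) sequentially"
    using ev_n1 ev_K1 ev_kn ev_small ev_esmall
    by eventually_elim (use ratio_bounds(1)[OF q2] in \<open>auto simp: U_def e_def kf_def\<close>)
  have ev_lo: "eventually (\<lambda>n. W (kf n) \<le> ratio q z n) sequentially"
    using ev_n1 ev_K1 ev_kn ev_small ev_esmall
    by eventually_elim (use ratio_bounds(2)[OF q2] in \<open>auto simp: W_def C_def e_def kf_def\<close>)
  show ?thesis
    by (rule tendsto_sandwich[OF ev_lo ev_up filterlim_compose[OF Wlim kf_top] filterlim_compose[OF Ulim kf_top]])
qed


theorem lemma6:
  fixes q :: nat and z :: int
  assumes "q \<ge> 2"
  shows "(\<lambda>n. real (card (C1 n q (nat (\<lceil>log q (real n)\<rceil> + z))))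
           / ((real q ^ n / real n) * ((real q - 1) / real q) ^ 2
              * real q powr ((log q (real n) - \<lceil>log q (real n)\<rceil>) - z
                   - log q (exp 1) * (real q - 1)
                     * real q powr ((log q (real n) - \<lceil>log q (real n)\<rceil>) - z - 1))))
         \<longlonglongrightarrow> 1"
  using main_lim[OF assms, of z] unfolding ratio_def .

end
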